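(* If $\Gamma$ is a Deza graph with parameters $(n,k,k-1,a)$, $k > 1$, and $\beta = 1$, then $\Gamma$ can be obtained either from Construction 1 or from Construction 2 (both described in the context below).
   Context: A Deza graph with parameters $(n,k,b,a)$ is a $k$-regular graph on $n$ vertices in which any two distinct vertices have either $a$ or $b$ ($a\le b$) common neighbours. For a vertex $v$, $\beta$ denotes the number of vertices $u$ with $|N(v)\cap N(u)|=b$; this number does not depend on $v$. Both constructions start from a strongly regular graph $\Delta$ with parameters $(m,\ell,\lambda,\mu)$ where $\lambda=\mu-1$, with adjacency matrix $B$. Construction 1: $\Gamma_1$ is the strong product of $K_2$ and $\Delta$, i.e. its adjacency matrix is $A_1 = B\otimes J_2 - I_{2m}$ ($J_2$ the $2\times 2$ all-ones matrix, $I_{2m}$ the identity matrix). It is a strictly Deza graph with parameters $(n,k,k-1,a)$ and $\beta=1$, where $n=2m$, $k=2\ell+1$, $a=2\mu$. Construction 2: assume $\Delta$ has an involutive automorphism that interchanges only non-adjacent vertices, with permutation matrix $P$. Let $P_1=P\otimes I_2$ and $A_2=P_1A_1$. Equivalently: take the strong product of $K_2$ with the graph of adjacency matrix $PB$ (dual Seidel switching of $\Delta$), and for every transposition $(x~y)$ of the involution, with corresponding vertex pairs $x',x''$ and $y',y''$, delete the edges $\{x',x''\}$, $\{y',y''\}$ and insert the edges $\{x',y''\}$, $\{x'',y'\}$. The resulting graph $\Gamma_2$ (adjacency matrix $A_2$, with $A_2^2=A_1^2$) is a strictly Deza graph with parameters $(n,k,k-1,a)$ and $\beta=1$, where $n=2m$,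 $k=2\ell+1$, $a=2\mu$. *)

theory Defs
  imports Main
begin

text \<open>Finite simple graphs: a finite vertex set V with a symmetric irreflexive
  adjacency relation E (only its restriction to V matters).\<close>

definition sgraph :: "'a set \<Rightarrow> ('a \<Rightarrow> 'a \<Rightarrow> bool) \<Rightarrow> bool" where
  "sgraph V E \<longleftrightarrow> finite V \<and> (\<forall>x\<in>V. \<not> E x x) \<and> (\<forall>x\<in>V. \<forall>y\<in>V. E x y \<longleftrightarrow> E y x)"

definition nbhd :: "'a set \<Rightarrow> ('a \<Rightarrow> 'a \<Rightarrow> bool) \<Rightarrow> 'a \<Rightarrow> 'a set" where
  "nbhd V E v = {u\<in>V. E v u}"

definition regular :: "'a set \<Rightarrow> ('a \<Rightarrow> 'a \<Rightarrow> bool) \<Rightarrow> nat \<Rightarrow> bool" where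
  "regular V E k \<longleftrightarrow> (\<forall>v\<in>V. card (nbhd V E v) = k)"

definition deza_graph :: "'a set \<Rightarrow> ('a \<Rightarrow> 'a \<Rightarrow> bool) \<Rightarrow> nat \<Rightarrow> nat \<Rightarrow> nat \<Rightarrow> nat \<Rightarrow> bool" where
  "deza_graph V E n k b a \<longleftrightarrow> sgraph V E \<and> card V = n \<and> regular V E k \<and> a \<le> b \<and>
     (\<forall>u\<in>V. \<forall>v\<in>V. u \<noteq> v \<longrightarrow>
        card (nbhd V E u \<inter> nbhd V E v) = a \<or> card (nbhd V E u \<inter> nbhd V E v) = b)"

definition beta_at :: "'a set \<Rightarrow> ('a \<Rightarrow> 'a \<Rightarrow> bool) \<Rightarrow> nat \<Rightarrow> 'a \<Rightarrow> nat" where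
  "beta_at V E b v = card {u\<in>V. u \<noteq> v \<and> card (nbhd V E v \<inter> nbhd V E u) = b}"

definition srg :: "'a set \<Rightarrow> ('a \<Rightarrow> 'a \<Rightarrow> bool) \<Rightarrow> nat \<Rightarrow> nat \<Rightarrow> nat \<Rightarrow> nat \<Rightarrow> bool" where
  "srg V E m l lam mu \<longleftrightarrow> sgraph V E \<and> card V = m \<and> regular V E l \<and>
     (\<forall>u\<in>V. \<forall>v\<in>V. u \<noteq> v \<longrightarrow> E u v \<longrightarrow> card (nbhd V E u \<inter> nbhd V E v) = lam) \<and>
     (\<forall>u\<in>V. \<forall>v\<in>V. u \<noteq> v \<longrightarrow> \<not> E u v \<longrightarrow> card (nbhd V E u \<inter> nbhd V E v) = mu)"

definition graph_iso :: "'a set \<Rightarrow> ('a \<Rightarrow> 'a \<Rightarrow> bool) \<Rightarrow> 'b set \<Rightarrow> ('b \<Rightarrow> 'b \<Rightarrow> bool) \<Rightarrow> bool" where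
  "graph_iso V E W F \<longleftrightarrow> (\<exists>f. bij_betw f V W \<and> (\<forall>u\<in>V. \<forall>v\<in>V. E u v \<longleftrightarrow> F (f u) (f v)))"

text \<open>Construction 1: strong product of K_2 and Delta, vertex set D \<times> UNIV (bool indexes K_2);
  adjacency matrix B \<otimes> J_2 - I.\<close>
definition constr1 :: "('a \<Rightarrow> 'a \<Rightarrow> bool) \<Rightarrow> ('a \<times> bool) \<Rightarrow> ('a \<times> bool) \<Rightarrow> bool" where
  "constr1 B p q \<longleftrightarrow> p \<noteq> q \<and> (fst p = fst q \<or> B (fst p) (fst q))"

definition nonadj_invol_aut :: "'a set \<Rightarrow> ('a \<Rightarrow> 'a \<Rightarrow> bool) \<Rightarrow> ('a \<Rightarrow> 'a) \<Rightarrow> bool" where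
  "nonadj_invol_aut V E s \<longleftrightarrow> s ` V \<subseteq> V \<and> (\<forall>x\<in>V. s (s x) = x) \<and>
     (\<forall>x\<in>V. \<forall>y\<in>V. E (s x) (s y) \<longleftrightarrow> E x y) \<and>
     (\<forall>x\<in>V. s x \<noteq> x \<longrightarrow> \<not> E x (s x))"

text \<open>Construction 2: adjacency matrix A_2 = P_1 A_1 with P_1 = P \<otimes> I_2, i.e.
  A_2((x,i),(y,j)) = A_1((s x,i),(y,j)).\<close>
definition constr2 :: "('a \<Rightarrow> 'a \<Rightarrow> bool) \<Rightarrow> ('a \<Rightarrow> 'a) \<Rightarrow> ('a \<times> bool) \<Rightarrow> ('a \<times> bool) \<Rightarrow> bool" where
  "constr2 B s p q \<longleftrightarrow> constr1 B (s (fst p), snd p) q"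

end

theory Submission
  imports Defs
begin

lemma card_insert_inter:
  assumes "finite A" "finite B" "x \<noteq> y" "x \<notin> A" "y \<notin> B"
  shows "card (insert x A \<inter> insert y B) = card (A \<inter> B) + (if x \<in> B then 1 else 0) + (if y \<in> A then 1 else 0)"
proof (cases "x \<in> B"; cases "y \<in> A")
  assume h: "x \<in> B" "y \<in> A"
  then have "insert x A \<inter> insert y B = insert x (insert y (A \<inter> B))" using assms by auto
  then show ?thesis using assms h by simp
next
  assume h: "x \<in> B" "y \<notin> A"
  then have "insert x A \<inter> insert y B = insert x (A \<inter> B)" using assms by auto
  then show ?thesis using assms h by simp
next
  assume h: "x \<notin> B" "y \<in> A"
  then have "insert x A \<inter> insert y B = insert y (A \<inter> B)" using assms by auto
  then show ?thesis using assms h by simp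
next
  assume h: "x \<notin> B" "y \<notin> A"
  then have "insert x A \<inter> insert y B = A \<inter> B" using assms by auto
  then show ?thesis using assms h by simp
qed

locale dz =
  fixes V :: "'a set" and E :: "'a \<Rightarrow> 'a \<Rightarrow> bool" and k a :: nat
  assumes fin: "finite V" and irr: "\<And>x. x \<in> V \<Longrightarrow> \<not> E x x"
    and sym: "\<And>x y. x \<in> V \<Longrightarrow> y \<in> V \<Longrightarrow> E x y \<longleftrightarrow> E y x"
    and reg: "\<And>v. v \<in> V \<Longrightarrow> card (nbhd V E v) = k"
    and k1: "k > 1" and ne: "V \<noteq> {}"
    and cnt: "\<And>u v. u \<in> V \<Longrightarrow> v \<in> V \<Longrightarrow> u \<noteq> v \<Longrightarrow>
       card (nbhd V E u \<inter> nbhd V E v) = a \<or> card (nbhd V E u \<inter> nbhd V E v) = k - 1"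
    and beta: "\<And>v. v \<in> V \<Longrightarrow> card {u\<in>V. u \<noteq> v \<and> card (nbhd V E v \<inter> nbhd V E u) = k - 1} = 1"
    and ale: "a \<le> k - 1"
begin

abbreviation "N \<equiv> nbhd V E"

lemma mem_N: "u \<in> N v \<longleftrightarrow> u \<in> V \<and> E v u"
  by (simp add: nbhd_def)

lemma N_sub: "N v \<subseteq> V" by (auto simp: nbhd_def)

lemma fin_N[simp]: "finite (N v)" using N_sub fin finite_subset by blast

lemma a_lt: "a < k - 1"
proof (rule ccontr)
  assume "\<not> a < k - 1"
  with ale have aeq: "a = k - 1" by simp
  obtain v where v: "v \<in> V" using ne by blast
  have "N v \<subseteq> {u\<in>V. u \<noteq> v \<and> card (N v \<inter> N u) = k - 1}"
  proof
    fix u assume "u \<in> N v"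
    then have "u \<in> V" "u \<noteq> v" using v irr by (auto simp: mem_N)
    then show "u \<in> {u\<in>V. u \<noteq> v \<and> card (N v \<inter> N u) = k - 1}"
      using cnt[OF v, of u] aeq by auto
  qed
  then have "card (N v) \<le> card {u\<in>V. u \<noteq> v \<and> card (N v \<inter> N u) = k - 1}"
    by (rule card_mono[rotated]) (use fin in auto)
  then have "card (N v) \<le> 1" using beta[OF v] by simp
  then show False using reg[OF v] k1 by simp
qed

definition p where "p v = (THE u. u \<in> V \<and> u \<noteq> v \<and> card (N v \<inter> N u) = k - 1)"

lemma p_prop:
  assumes v: "v \<in> V"
  shows "p v \<in> V \<and> p v \<noteq> v \<and> card (N v \<inter> N (p v)) = k - 1 \<and>
    (\<forall>u. u \<in> V \<and> u \<noteq> v \<and> card (N v \<inter> N u) = k - 1 \<longrightarrow> u = p v)"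
proof -
  obtain z where z: "{u\<in>V. u \<noteq> v \<and> card (N v \<inter> N u) = k - 1} = {z}"
    using card_1_singletonE[OF beta[OF v]] .
  have "z \<in> {u\<in>V. u \<noteq> v \<and> card (N v \<inter> N u) = k - 1}" unfolding z by (rule singletonI)
  then have zP: "z \<in> V \<and> z \<noteq> v \<and> card (N v \<inter> N z) = k - 1" by (rule CollectD)
  have uq: "\<And>u. u \<in> V \<and> u \<noteq> v \<and> card (N v \<inter> N u) = k - 1 \<Longrightarrow> u = z"
  proof -
    fix u assume "u \<in> V \<and> u \<noteq> v \<and> card (N v \<inter> N u) = k - 1"
    then have "u \<in> {u\<in>V. u \<noteq> v \<and> card (N v \<inter> N u) = k - 1}" by (rule CollectI)
    then show "u = z" unfolding z by (rule singletonD)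
  qed
  have pz: "p v = z" unfolding p_def using zP uq by (rule the_equality)
  show ?thesis unfolding pz using zP uq by (intro conjI allI impI) (elim conjE; assumption)+
qed

lemma pV: "v \<in> V \<Longrightarrow> p v \<in> V" by (rule conjunct1[OF p_prop])
lemma p_ne: "v \<in> V \<Longrightarrow> p v \<noteq> v" by (rule conjunct1[OF conjunct2[OF p_prop]])
lemma p_card: "v \<in> V \<Longrightarrow> card (N v \<inter> N (p v)) = k - 1" by (rule conjunct1[OF conjunct2[OF conjunct2[OF p_prop]]])

lemma p_uniq: "v \<in> V \<Longrightarrow> u \<in> V \<Longrightarrow> u \<noteq> v \<Longrightarrow> card (N v \<inter> N u) = k - 1 \<Longrightarrow> u = p v"
proof -
  assume "v \<in> V" "u \<in> V" "u \<noteq> v" "card (N v \<inter> N u) = k - 1"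
  have "\<forall>u. u \<in> V \<and> u \<noteq> v \<and> card (N v \<inter> N u) = k - 1 \<longrightarrow> u = p v"
    by (rule conjunct2[OF conjunct2[OF conjunct2[OF p_prop[OF \<open>v \<in> V\<close>]]]])
  then show "u = p v" using \<open>u \<in> V\<close> \<open>u \<noteq> v\<close> \<open>card (N v \<inter> N u) = k - 1\<close> by blast
qed

lemma p_p: "v \<in> V \<Longrightarrow> p (p v) = v"
proof -
  assume v: "v \<in> V"
  have "card (N (p v) \<inter> N v) = k - 1" using p_card[OF v] by (simp add: Int_commute)
  then have "v = p (p v)" using p_uniq[OF pV[OF v] v] v p_ne[OF v] by metis
  then show ?thesis by simp
qed

lemma card_other: "u \<in> V \<Longrightarrow> w \<in> V \<Longrightarrow> w \<noteq> u \<Longrightarrow> w \<noteq> p u \<Longrightarrow> card (N u \<inter> N w) = a"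
proof -
  assume u: "u \<in> V" and w: "w \<in> V" and "w \<noteq> u" and np: "w \<noteq> p u"
  have "card (N u \<inter> N w) \<noteq> k - 1"
  proof
    assume "card (N u \<inter> N w) = k - 1"
    then show False using p_uniq[OF u w \<open>w \<noteq> u\<close>] np by simp
  qed
  then show ?thesis using cnt[OF u w] \<open>w \<noteq> u\<close> by auto
qed

lemma cval: "v \<in> V \<Longrightarrow> w \<in> V \<Longrightarrow>
  card (N v \<inter> N w) = a + (if v = w then k - a else 0) + (if v = p w then k - 1 - a else 0)"
proof -
  assume v: "v \<in> V" and w: "w \<in> V"
  show ?thesis
  proof (cases "v = w")
    case True
    then show ?thesis using reg[OF w] p_ne[OF w] a_lt by auto
  next
    case False
    show ?thesis
    proof (cases "v = p w")
      case True
      then have "card (N v \<inter> N w) = k - 1" using p_card[OF w] by (simp add: Int_commute)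
      then show ?thesis using True False a_lt by simp
    next
      case F2: False
      have "w \<noteq> p v"
      proof
        assume "w = p v"
        then have "p w = v" using p_p v by simp
        then show False using F2 by simp
      qed
      then show ?thesis using card_other[OF v w] False F2 by auto
    qed
  qed
qed

lemma walks: "u \<in> V \<Longrightarrow> w \<in> V \<Longrightarrow>
  (\<Sum>v\<in>N u. card (N v \<inter> N w)) = (\<Sum>x\<in>N w. card (N u \<inter> N x))"
proof -
  assume u: "u \<in> V" and w: "w \<in> V"
  have "(\<Sum>v\<in>N u. card (N v \<inter> N w)) = (\<Sum>v\<in>N u. \<Sum>x\<in>N w. if x \<in> N v then 1 else 0)"
  proof (rule sum.cong[OF refl])
    fix v assume "v \<in> N u"
    have "N v \<inter> N w = {x \<in> N w. x \<in> N v}" by auto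
    then show "card (N v \<inter> N w) = (\<Sum>x\<in>N w. if x \<in> N v then 1 else 0)"
      using sum.inter_filter[of "N w" "\<lambda>_. 1::nat" "\<lambda>x. x \<in> N v"] by simp
  qed
  also have "\<dots> = (\<Sum>x\<in>N w. \<Sum>v\<in>N u. if x \<in> N v then 1 else 0)" by (rule sum.swap)
  also have "\<dots> = (\<Sum>x\<in>N w. card (N u \<inter> N x))"
  proof (rule sum.cong[OF refl])
    fix x assume x: "x \<in> N w"
    then have xV: "x \<in> V" using N_sub by blast
    have "N u \<inter> N x = {v \<in> N u. x \<in> N v}" using xV sym N_sub by (auto simp: mem_N)
    then show "(\<Sum>v\<in>N u. if x \<in> N v then 1 else 0) = card (N u \<inter> N x)"
      using sum.inter_filter[of "N u" "\<lambda>_. 1::nat" "\<lambda>v. x \<in> N v"] by simp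
  qed
  finally show ?thesis .
qed

lemma sum_if_eq: "finite S \<Longrightarrow> (\<Sum>v\<in>S. (c::nat) + (if v = w then e else 0) + (if v = q then f else 0))
   = c * card S + (if w \<in> S then e else 0) + (if q \<in> S then f else 0)"
  by (simp add: sum.distrib)

lemma Paut: "u \<in> V \<Longrightarrow> w \<in> V \<Longrightarrow> E u (p w) \<longleftrightarrow> E (p u) w"
proof -
  assume u: "u \<in> V" and w: "w \<in> V"
  have L: "(\<Sum>v\<in>N u. card (N v \<inter> N w)) = a * k + (if w \<in> N u then k - a else 0) + (if p w \<in> N u then k - 1 - a else 0)"
  proof -
    have "(\<Sum>v\<in>N u. card (N v \<inter> N w)) = (\<Sum>v\<in>N u. a + (if v = w then k - a else 0) + (if v = p w then k - 1 - a else 0))"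
    proof (rule sum.cong[OF refl])
      fix x assume "x \<in> N u"
      then have xV: "x \<in> V" using N_sub by blast
      show "card (N x \<inter> N w) = a + (if x = w then k - a else 0) + (if x = p w then k - 1 - a else 0)"
        by (rule cval[OF xV w])
    qed
    then show ?thesis using sum_if_eq[of "N u" a w "k-a" "p w" "k-1-a"] reg[OF u] by simp
  qed
  have R: "(\<Sum>x\<in>N w. card (N u \<inter> N x)) = a * k + (if u \<in> N w then k - a else 0) + (if p u \<in> N w then k - 1 - a else 0)"
  proof -
    have "(\<Sum>x\<in>N w. card (N u \<inter> N x)) = (\<Sum>x\<in>N w. a + (if x = u then k - a else 0) + (if x = p u then k - 1 - a else 0))"
    proof (rule sum.cong[OF refl])
      fix x assume "x \<in> N w"
      then have xV: "x \<in> V" using N_sub by blast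
      have "card (N u \<inter> N x) = card (N x \<inter> N u)" by (simp only: Int_commute)
      then show "card (N u \<inter> N x) = a + (if x = u then k - a else 0) + (if x = p u then k - 1 - a else 0)"
        using cval[OF xV u] by simp
    qed
    then show ?thesis using sum_if_eq[of "N w" a u "k-a" "p u" "k-1-a"] reg[OF w] by simp
  qed
  have "w \<in> N u \<longleftrightarrow> u \<in> N w" using u w sym by (auto simp: mem_N)
  then have "(if p w \<in> N u then k - 1 - a else 0) = (if p u \<in> N w then k - 1 - a else 0)"
    using walks[OF u w] L R by (simp split: if_splits)
  then have "p w \<in> N u \<longleftrightarrow> p u \<in> N w" using a_lt by (simp split: if_splits)
  then show ?thesis using pV[OF u] pV[OF w] u w sym[OF w pV[OF u]] by (simp add: mem_N)
qed

lemma Paut2: "u \<in> V \<Longrightarrow> w \<in> V \<Longrightarrow> E (p u) (p w) \<longleftrightarrow> E u w"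
proof -
  assume u: "u \<in> V" and w: "w \<in> V"
  show ?thesis using Paut[OF u pV[OF w]] p_p[OF w] by simp
qed

end

context dz
begin

definition C where "C v = N v \<inter> N (p v)"

lemma C_sub_N: "C v \<subseteq> N v" by (auto simp: C_def)
lemma C_sub: "C v \<subseteq> V" using C_sub_N N_sub by blast
lemma fin_C[simp]: "finite (C v)" using C_sub fin finite_subset by blast
lemma card_C: "v \<in> V \<Longrightarrow> card (C v) = k - 1" unfolding C_def by (rule p_card)

lemma diff_one: "v \<in> V \<Longrightarrow> card (N v - N (p v)) = 1"
proof -
  assume v: "v \<in> V"
  have "card (N v - N (p v)) = card (N v) - card (N v \<inter> N (p v))"
    by (rule card_Diff_subset_Int) simp
  then show ?thesis using reg[OF v] p_card[OF v] k1 by simp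
qed

definition d where "d v = (THE u. u \<in> N v - N (p v))"

lemma d_set: "v \<in> V \<Longrightarrow> N v - N (p v) = {d v}"
proof -
  assume v: "v \<in> V"
  obtain z where z: "N v - N (p v) = {z}" using card_1_singletonE[OF diff_one[OF v]] .
  have "z \<in> N v - N (p v)" unfolding z by (rule singletonI)
  moreover have "\<And>u. u \<in> N v - N (p v) \<Longrightarrow> u = z" unfolding z by (rule singletonD)
  ultimately have "d v = z" unfolding d_def by (rule the_equality)
  then show ?thesis using z by simp
qed

lemma d_N: "v \<in> V \<Longrightarrow> d v \<in> N v" using d_set by blast
lemma d_nN: "v \<in> V \<Longrightarrow> d v \<notin> N (p v)" using d_set by blast
lemma dV[simp]: "v \<in> V \<Longrightarrow> d v \<in> V" using d_N N_sub by blast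
lemma d_ne: "v \<in> V \<Longrightarrow> d v \<noteq> v"
proof
  assume v: "v \<in> V" and e: "d v = v"
  have "v \<in> N v" using d_N[OF v] e by simp
  then show False using irr[OF v] by (simp add: mem_N)
qed
lemma notC: "v \<in> V \<Longrightarrow> v \<notin> C v"
proof
  assume v: "v \<in> V" and "v \<in> C v"
  then have "v \<in> N v" using C_sub_N by blast
  then show False using irr[OF v] by (simp add: mem_N)
qed
lemma d_nC: "v \<in> V \<Longrightarrow> d v \<notin> C v" using d_nN by (auto simp: C_def)
lemma N_ins: "v \<in> V \<Longrightarrow> N v = insert (d v) (C v)"
  using d_set[of v] d_N[of v] C_sub_N[of v] unfolding C_def by blast

lemma pV'[simp]: "v \<in> V \<Longrightarrow> p v \<in> V" by (rule pV)
lemma pp[simp]: "v \<in> V \<Longrightarrow> p (p v) = v" by (rule p_p)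

lemma pN: "v \<in> V \<Longrightarrow> z \<in> V \<Longrightarrow> p z \<in> N (p v) \<longleftrightarrow> z \<in> N v"
  using Paut2[of v z] by (simp add: mem_N)

lemma C_cl: "v \<in> V \<Longrightarrow> z \<in> C v \<Longrightarrow> p z \<in> C v"
proof -
  assume v: "v \<in> V" and z: "z \<in> C v"
  then have zV: "z \<in> V" using C_sub by blast
  have "z \<in> N v" "z \<in> N (p v)" using z by (auto simp: C_def)
  then have "p z \<in> N (p v)" "p z \<in> N v" using pN[OF v zV] pN[OF pV'[OF v] zV] v by auto
  then show ?thesis by (simp add: C_def)
qed

lemma C_cl_iff: "v \<in> V \<Longrightarrow> z \<in> V \<Longrightarrow> p z \<in> C v \<longleftrightarrow> z \<in> C v"
  using C_cl[of v z] C_cl[of v "p z"] by auto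

lemma C_p: "v \<in> V \<Longrightarrow> C (p v) = C v"
  by (simp add: C_def Int_commute)

lemma N_p_iff: "v \<in> V \<Longrightarrow> z \<in> V \<Longrightarrow> z \<in> N v \<longleftrightarrow> p z \<in> N (p v)"
  using pN by simp

lemma d_p: "v \<in> V \<Longrightarrow> d (p v) = p (d v)"
proof -
  assume v: "v \<in> V"
  have a1: "p (d v) \<in> N (p v)" using pN[OF v dV[OF v]] d_N[OF v] by simp
  have "p (d v) \<notin> N v"
  proof
    assume "p (d v) \<in> N v"
    then have "p (p (d v)) \<in> N (p v)" using N_p_iff[OF v pV'[OF dV[OF v]]] by simp
    then show False using d_nN[OF v] v by simp
  qed
  then have "p (d v) \<in> N (p v) - N (p (p v))" using a1 v by simp
  then show ?thesis using d_set[OF pV'[OF v]] by simp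
qed

lemma d_d[simp]: "v \<in> V \<Longrightarrow> d (d v) = v"
proof -
  assume v: "v \<in> V"
  have a1: "v \<in> N (d v)" using d_N[OF v] sym[OF v dV[OF v]] v by (simp add: mem_N)
  have "v \<notin> N (p (d v))"
  proof
    assume "v \<in> N (p (d v))"
    then have "p v \<in> N (p (p (d v)))" using N_p_iff[OF pV'[OF dV[OF v]] v] by simp
    then have "p v \<in> N (d v)" using v by simp
    then have "d v \<in> N (p v)" using sym[OF dV[OF v] pV'[OF v]] v by (simp add: mem_N)
    then show False using d_nN[OF v] by simp
  qed
  then have "v \<in> N (d v) - N (p (d v))" using a1 by simp
  then show ?thesis using d_set[OF dV[OF v]] by simp
qed

lemma d_inj: "x \<in> V \<Longrightarrow> y \<in> V \<Longrightarrow> d x = d y \<Longrightarrow> x = y"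
  by (metis d_d)

lemma p_inj: "x \<in> V \<Longrightarrow> y \<in> V \<Longrightarrow> p x = p y \<Longrightarrow> x = y"
  by (metis pp)

definition h :: "'a \<Rightarrow> nat" where "h = (SOME h. inj_on h V)"

lemma h_inj: "inj_on h V"
proof -
  have "\<exists>h::'a\<Rightarrow>nat. inj_on h V" using finite_imp_inj_to_nat_seg[OF fin] by blast
  then show ?thesis unfolding h_def by (rule someI_ex)
qed

definition m where "m v = min (h v) (h (p (d v)))"
definition L where "L v \<longleftrightarrow> m (p v) < m v"

lemma hne: "x \<in> V \<Longrightarrow> y \<in> V \<Longrightarrow> x \<noteq> y \<Longrightarrow> h x \<noteq> h y"
  using h_inj by (auto simp: inj_on_def)

lemma m_p: "v \<in> V \<Longrightarrow> m (p v) = min (h (p v)) (h (d v))"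
proof -
  assume v: "v \<in> V"
  have "p (d (p v)) = d v" using d_p[OF v] dV[OF v] pp by simp
  then show ?thesis by (simp add: m_def)
qed

lemma m_ne: "v \<in> V \<Longrightarrow> m v \<noteq> m (p v)"
proof -
  assume v: "v \<in> V"
  have n1: "h v \<noteq> h (p v)" using hne[of v "p v"] v p_ne[OF v] by auto
  have n2: "h v \<noteq> h (d v)" using hne[of v "d v"] v d_ne[OF v] by auto
  have n3: "h (p (d v)) \<noteq> h (p v)" using hne[of "p (d v)" "p v"] v d_ne[OF v] p_inj[of "d v" v] by auto
  have n4: "h (p (d v)) \<noteq> h (d v)" using hne[of "p (d v)" "d v"] v p_ne[OF dV[OF v]] by auto
  show ?thesis unfolding m_p[OF v] unfolding m_def using n1 n2 n3 n4 by (simp add: min_def)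
qed

lemma L_p: "v \<in> V \<Longrightarrow> L (p v) \<longleftrightarrow> \<not> L v"
  using m_ne[of v] by (auto simp: L_def)

lemma L_d: "v \<in> V \<Longrightarrow> L (d v) \<longleftrightarrow> \<not> L v"
proof -
  assume v: "v \<in> V"
  have e1: "m (d v) = m (p v)" unfolding m_p[OF v] unfolding m_def using v by (simp add: min.commute)
  have e2: "m (p (d v)) = m v" unfolding m_p[OF dV[OF v]] unfolding m_def using v by (simp add: min.commute)
  show ?thesis using m_ne[OF v] e1 e2 by (auto simp: L_def)
qed

definition R where "R = {v \<in> V. \<not> L v}"

lemma half: "S \<subseteq> V \<Longrightarrow> (\<And>z. z \<in> S \<Longrightarrow> p z \<in> S) \<Longrightarrow> card S = 2 * card (R \<inter> S)"
proof -
  assume SV: "S \<subseteq> V" and cl: "\<And>z. z \<in> S \<Longrightarrow> p z \<in> S"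
  have fS: "finite S" using SV fin finite_subset by blast
  have eq: "S = (R \<inter> S) \<union> p ` (R \<inter> S)"
  proof
    show "S \<subseteq> (R \<inter> S) \<union> p ` (R \<inter> S)"
    proof
      fix z assume z: "z \<in> S"
      then have zV: "z \<in> V" using SV by blast
      show "z \<in> (R \<inter> S) \<union> p ` (R \<inter> S)"
      proof (cases "L z")
        case True
        then have "p z \<in> R \<inter> S" using L_p[OF zV] cl[OF z] zV by (simp add: R_def)
        then have "p (p z) \<in> p ` (R \<inter> S)" by blast
        then show ?thesis using zV by simp
      next
        case False
        then show ?thesis using z zV by (simp add: R_def)
      qed
    qed
    show "(R \<inter> S) \<union> p ` (R \<inter> S) \<subseteq> S" using cl by blast
  qed
  have disj: "(R \<inter> S) \<inter> p ` (R \<inter> S) = {}"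
    using L_p SV by (auto simp: R_def)
  have inj: "inj_on p (R \<inter> S)" using p_inj SV by (auto simp: inj_on_def)
  have "card S = card (R \<inter> S) + card (p ` (R \<inter> S))"
    using card_Un_disjoint[of "R \<inter> S" "p ` (R \<inter> S)"] fS disj eq by (metis finite_Int finite_imageI)
  then show ?thesis using card_image[OF inj] by simp
qed

lemma GF: "u \<in> V \<Longrightarrow> w \<in> V \<Longrightarrow> w \<noteq> u \<Longrightarrow> w \<noteq> p u \<Longrightarrow>
  a = card (C u \<inter> C w) + (if d u \<in> C w then 1 else 0) + (if d w \<in> C u then 1 else 0)"
proof -
  assume u: "u \<in> V" and w: "w \<in> V" and n1: "w \<noteq> u" and n2: "w \<noteq> p u"
  have "a = card (N u \<inter> N w)" using card_other[OF u w n1 n2] by simp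
  also have "\<dots> = card (insert (d u) (C u) \<inter> insert (d w) (C w))" using N_ins u w by simp
  also have "\<dots> = card (C u \<inter> C w) + (if d u \<in> C w then 1 else 0) + (if d w \<in> C u then 1 else 0)"
    by (rule card_insert_inter) (use d_inj[OF u w] n1 d_nC u w in auto)
  finally show ?thesis .
qed

lemma even_CC: "u \<in> V \<Longrightarrow> w \<in> V \<Longrightarrow> even (card (C u \<inter> C w))"
proof -
  assume u: "u \<in> V" and w: "w \<in> V"
  have "card (C u \<inter> C w) = 2 * card (R \<inter> (C u \<inter> C w))"
    by (rule half) (use C_sub C_cl u w in auto)
  then show ?thesis by simp
qed

lemma a_even: "even a"
proof (rule ccontr)
  assume odd: "odd a"
  show False
  proof (cases "\<exists>v\<in>V. d v \<noteq> p v")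
    case True
    then obtain v where v: "v \<in> V" and ne1: "d v \<noteq> p v" by blast
    have "a = card (C v \<inter> C (d v)) + (if d v \<in> C (d v) then 1 else 0) + (if d (d v) \<in> C v then 1 else 0)"
      by (rule GF) (use v d_ne ne1 in auto)
    then have "a = card (C v \<inter> C (d v))" using notC[of "d v"] notC[of v] v by simp
    then show False using even_CC[OF v dV[OF v]] odd by simp
  next
    case False
    then have dp: "\<And>v. v \<in> V \<Longrightarrow> d v = p v" by blast
    obtain v where v: "v \<in> V" using ne by blast
    have "C v \<noteq> {}" using card_C[OF v] k1 by auto
    then obtain w where wC: "w \<in> C v" by blast
    then have wV: "w \<in> V" using C_sub by blast
    have wN: "w \<in> N v" using wC C_sub_N by blast
    have wnv: "w \<noteq> v" using wN irr v by (auto simp: mem_N)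
    have wnp: "w \<noteq> p v" using wC d_nC[OF v] dp[OF v] by auto
    have vN: "v \<in> N w" using wN sym[OF v wV] v by (simp add: mem_N)
    have "v \<noteq> d w"
    proof
      assume "v = d w"
      then have "v = p w" using dp[OF wV] by simp
      then have "p v = w" using wV by simp
      then show False using wnp by simp
    qed
    then have vC: "v \<in> C w" using vN N_ins[OF wV] by simp
    have "a = card (C v \<inter> C w) + (if d v \<in> C w then 1 else 0) + (if d w \<in> C v then 1 else 0)"
      by (rule GF[OF v wV wnv wnp])
    moreover have "d v \<in> C w" using dp[OF v] C_cl_iff[OF wV v] vC by simp
    moreover have "d w \<in> C v" using dp[OF wV] C_cl_iff[OF v wV] wC by simp
    ultimately have "a = card (C v \<inter> C w) + 2" by simp
    then show False using even_CC[OF v wV] odd by simp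
  qed
qed

lemma R1: "u \<in> V \<Longrightarrow> w \<in> V \<Longrightarrow> w \<noteq> u \<Longrightarrow> w \<noteq> p u \<Longrightarrow> d u \<in> C w \<longleftrightarrow> d w \<in> C u"
proof -
  assume as: "u \<in> V" "w \<in> V" "w \<noteq> u" "w \<noteq> p u"
  show ?thesis using GF[OF as] a_even even_CC[OF as(1,2)] by (auto split: if_splits)
qed

lemma G: "x \<in> V \<Longrightarrow> y \<in> V \<Longrightarrow> y \<noteq> x \<Longrightarrow> y \<in> C (d x) \<longleftrightarrow> d x \<in> C y"
proof -
  assume x: "x \<in> V" and y: "y \<in> V" and ne1: "y \<noteq> x"
  have "y \<in> C (d x) \<longleftrightarrow> y \<in> N (d x)" using N_ins[OF dV[OF x]] x ne1 d_nC[OF dV[OF x]] by auto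
  also have "\<dots> \<longleftrightarrow> d x \<in> N y" using sym[OF dV[OF x] y] x y by (simp add: mem_N)
  also have "\<dots> \<longleftrightarrow> d x \<in> C y" using N_ins[OF y] d_inj[OF x y] ne1 by auto
  finally show ?thesis .
qed

lemma Bchar: "x \<in> V \<Longrightarrow> y \<in> V \<Longrightarrow> y \<in> C (d x) \<longleftrightarrow> d y \<in> C x"
proof -
  assume x: "x \<in> V" and y: "y \<in> V"
  show ?thesis
  proof (cases "y = x")
    case True
    then show ?thesis using d_nC[OF dV[OF x]] d_nC[OF x] x by simp
  next
    case F1: False
    show ?thesis
    proof (cases "y = p x")
      case True
      have "p x \<notin> C (d x)" using C_cl_iff[OF dV[OF x] x] d_nC[OF dV[OF x]] x by simp
      moreover have "d (p x) \<notin> C x" using d_p[OF x] C_cl_iff[OF x dV[OF x]] d_nC[OF x] by simp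
      ultimately show ?thesis using True by simp
    next
      case False
      show ?thesis using G[OF x y F1] R1[OF x y F1 False] by simp
    qed
  qed
qed

lemma Bsym: "x \<in> V \<Longrightarrow> y \<in> V \<Longrightarrow> y \<in> C (d x) \<longleftrightarrow> x \<in> C (d y)"
proof -
  assume x: "x \<in> V" and y: "y \<in> V"
  show ?thesis
  proof (cases "x = y")
    case True then show ?thesis by simp
  next
    case False
    show ?thesis using Bchar[OF x y] G[OF y x False] by simp
  qed
qed

lemma FB: "x \<in> V \<Longrightarrow> y \<in> V \<Longrightarrow> y \<noteq> x \<Longrightarrow> y \<noteq> p x \<Longrightarrow>
  a = card (C (d x) \<inter> C (d y)) + (if y \<in> C (d x) then 2 else 0)"
proof -
  assume x: "x \<in> V" and y: "y \<in> V" and n1: "y \<noteq> x" and n2: "y \<noteq> p x"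
  have m1: "d y \<noteq> d x" using d_inj[OF x y] n1 by auto
  have m2: "d y \<noteq> p (d x)" using d_p[OF x] d_inj[OF pV'[OF x] y] n2 by auto
  have "a = card (C (d x) \<inter> C (d y)) + (if d (d x) \<in> C (d y) then 1 else 0) + (if d (d y) \<in> C (d x) then 1 else 0)"
    by (rule GF[OF dV[OF x] dV[OF y] m1 m2])
  then show ?thesis using x y Bsym[OF x y] by simp
qed

lemma a_ge2: "a \<ge> 2"
proof -
  obtain v where v: "v \<in> V" using ne by blast
  have "C v \<noteq> {}" using card_C[OF v] k1 by auto
  then obtain y where yC: "y \<in> C v" by blast
  then have yV: "y \<in> V" using C_sub by blast
  have n1: "y \<noteq> d v" using yC d_nC[OF v] by auto
  have n2: "y \<noteq> p (d v)" using yC C_cl_iff[OF v dV[OF v]] d_nC[OF v] by auto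
  have "a = card (C (d (d v)) \<inter> C (d y)) + (if y \<in> C (d (d v)) then 2 else 0)"
    by (rule FB[OF dV[OF v] yV n1 n2])
  then show ?thesis using yC v by simp
qed

end

context dz
begin

definition s where "s x = p (d x)"
definition B where "B x y \<longleftrightarrow> y \<in> C (d x)"
definition f where "f v = (if L v then p v else v, L v)"
definition f' where "f' q = (if snd q then p (fst q) else fst q)"

lemma RV: "R \<subseteq> V" by (auto simp: R_def)

lemma nbB: "x \<in> R \<Longrightarrow> nbhd R B x = R \<inter> C (d x)"
  by (auto simp: nbhd_def B_def)

lemma R_np: "x \<in> R \<Longrightarrow> y \<in> R \<Longrightarrow> y \<noteq> p x"
  using L_p by (auto simp: R_def)

lemma srgR: "srg R B (card R) ((k - 1) div 2) ((a - 2) div 2) (a div 2)"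
  unfolding srg_def sgraph_def regular_def
proof (intro conjI ballI impI)
  show "finite R" using RV fin finite_subset by blast
  show "card R = card R" by simp
next
  fix x assume x: "x \<in> R"
  then have xV: "x \<in> V" using RV by blast
  show "\<not> B x x" using d_nC[OF dV[OF xV]] xV by (simp add: B_def)
next
  fix x y assume x: "x \<in> R" and y: "y \<in> R"
  then have xV: "x \<in> V" and yV: "y \<in> V" using RV by auto
  show "B x y = B y x" unfolding B_def using Bsym[OF xV yV] .
next
  fix x assume x: "x \<in> R"
  then have xV: "x \<in> V" using RV by blast
  have "card (C (d x)) = 2 * card (R \<inter> C (d x))"
    by (rule half) (use C_sub C_cl xV in auto)
  then show "card (nbhd R B x) = (k - 1) div 2" using nbB[OF x] card_C[OF dV[OF xV]] by simp
next
  fix x y assume x: "x \<in> R" and y: "y \<in> R" and ne1: "x \<noteq> y"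
  then have xV: "x \<in> V" and yV: "y \<in> V" using RV by auto
  have hc: "card (C (d x) \<inter> C (d y)) = 2 * card (R \<inter> (C (d x) \<inter> C (d y)))"
    by (rule half) (use C_sub C_cl xV yV in auto)
  have eqn: "nbhd R B x \<inter> nbhd R B y = R \<inter> (C (d x) \<inter> C (d y))" using nbB[OF x] nbB[OF y] by auto
  have fb: "a = card (C (d x) \<inter> C (d y)) + (if y \<in> C (d x) then 2 else 0)"
    by (rule FB[OF xV yV]) (use ne1 R_np[OF x y] in auto)
  {
    assume "B x y"
    then show "card (nbhd R B x \<inter> nbhd R B y) = (a - 2) div 2"
      using eqn hc fb by (simp add: B_def)
  next
    assume "\<not> B x y"
    then show "card (nbhd R B x \<inter> nbhd R B y) = a div 2"
      using eqn hc fb by (simp add: B_def)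
  }
qed

lemma s_R: "x \<in> R \<Longrightarrow> s x \<in> R"
proof -
  assume x: "x \<in> R"
  then have xV: "x \<in> V" using RV by blast
  have "L (p (d x)) \<longleftrightarrow> L x" using L_p[OF dV[OF xV]] L_d[OF xV] by simp
  then show ?thesis using x xV by (simp add: R_def s_def)
qed

lemma s_s: "x \<in> V \<Longrightarrow> s (s x) = x"
  by (simp add: s_def d_p)

lemma autR: "nonadj_invol_aut R B s"
  unfolding nonadj_invol_aut_def
proof (intro conjI ballI impI)
  show "s ` R \<subseteq> R" using s_R by blast
next
  fix x assume "x \<in> R" then show "s (s x) = x" using s_s RV by blast
next
  fix x y assume x: "x \<in> R" and y: "y \<in> R"
  then have xV: "x \<in> V" and yV: "y \<in> V" using RV by auto
  have "B (s x) (s y) \<longleftrightarrow> p (d y) \<in> C x"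
    using xV yV by (simp add: B_def s_def d_p C_p)
  also have "\<dots> \<longleftrightarrow> d y \<in> C x" using C_cl_iff[OF xV dV[OF yV]] .
  also have "\<dots> \<longleftrightarrow> B x y" using Bchar[OF xV yV] by (simp add: B_def)
  finally show "B (s x) (s y) = B x y" .
next
  fix x assume x: "x \<in> R" and "s x \<noteq> x"
  then have xV: "x \<in> V" using RV by blast
  have "p (d x) \<notin> C (d x)" using C_cl_iff[OF dV[OF xV] dV[OF xV]] notC[OF dV[OF xV]] by simp
  then show "\<not> B x (s x)" by (simp add: B_def s_def)
qed

lemma f_R: "v \<in> V \<Longrightarrow> fst (f v) \<in> R"
  using L_p by (auto simp: f_def R_def)

lemma f_bij: "bij_betw f V (R \<times> UNIV)"
proof (rule bij_betw_byWitness[where f'=f'])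
  show "\<forall>v\<in>V. f' (f v) = v" by (auto simp: f_def f'_def)
  show "\<forall>q\<in>R \<times> UNIV. f (f' q) = q"
  proof
    fix q :: "'a \<times> bool" assume q: "q \<in> R \<times> UNIV"
    obtain x i where qe: "q = (x, i)" by (cases q)
    then have x: "x \<in> R" using q by auto
    then have xV: "x \<in> V" using RV by blast
    have nL: "\<not> L x" using x by (simp add: R_def)
    show "f (f' q) = q" using qe nL L_p[OF xV] xV by (cases i) (auto simp: f_def f'_def)
  qed
  show "f ` V \<subseteq> R \<times> UNIV"
  proof
    fix q assume "q \<in> f ` V"
    then obtain v where v: "v \<in> V" and q: "q = f v" by blast
    show "q \<in> R \<times> UNIV" using f_R[OF v] q by (simp add: mem_Times_iff)
  qed
  show "f' ` (R \<times> UNIV) \<subseteq> V" using RV by (auto simp: f'_def)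
qed

lemma f_inj: "u \<in> V \<Longrightarrow> w \<in> V \<Longrightarrow> f u = f w \<longleftrightarrow> u = w"
  using f_bij by (auto simp: bij_betw_def inj_on_def)

lemma f_d: "u \<in> V \<Longrightarrow> f (d u) = (s (fst (f u)), \<not> L u)"
proof -
  assume u: "u \<in> V"
  show ?thesis
  proof (cases "L u")
    case True
    then have "\<not> L (d u)" using L_d[OF u] by simp
    then show ?thesis using True u by (simp add: f_def s_def d_p)
  next
    case False
    then have "L (d u)" using L_d[OF u] by simp
    then show ?thesis using False u by (simp add: f_def s_def)
  qed
qed

lemma C_f: "u \<in> V \<Longrightarrow> C (fst (f u)) = C u"
  by (simp add: f_def C_p)

lemma mem_C_f: "u \<in> V \<Longrightarrow> w \<in> V \<Longrightarrow> fst (f w) \<in> C u \<longleftrightarrow> w \<in> C u"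
  using C_cl_iff by (simp add: f_def)

lemma sf_nC: "u \<in> V \<Longrightarrow> s (fst (f u)) \<notin> C u"
proof -
  assume u: "u \<in> V"
  have "s (fst (f u)) = d u \<or> s (fst (f u)) = p (d u)" using u by (auto simp: f_def s_def d_p)
  then show ?thesis using d_nC[OF u] C_cl_iff[OF u dV[OF u]] by auto
qed

lemma isoR: "graph_iso V E (R \<times> UNIV) (constr2 B s)"
  unfolding graph_iso_def
proof (intro exI conjI ballI)
  show "bij_betw f V (R \<times> UNIV)" by (rule f_bij)
next
  fix u w assume u: "u \<in> V" and w: "w \<in> V"
  obtain x i where fu: "f u = (x, i)" by (cases "f u")
  obtain y j where fw: "f w = (y, j)" by (cases "f w")
  have xR: "x \<in> R" using f_R[OF u] fu by simp
  then have xV: "x \<in> V" using RV by blast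
  have iL: "i = L u" using fu by (simp add: f_def)
  have Cx: "C x = C u" using C_f[OF u] fu by simp
  have yC: "y \<in> C u \<longleftrightarrow> w \<in> C u" using mem_C_f[OF u w] fw by simp
  have sx: "s x \<notin> C u" using sf_nC[OF u] fu by simp
  have dsx: "d (s x) = p x" using xV by (simp add: s_def d_p)
  have Bs: "B (s x) y \<longleftrightarrow> y \<in> C u" using dsx C_p[OF xV] Cx by (simp add: B_def)
  have "E u w \<longleftrightarrow> w \<in> N u" using w by (simp add: mem_N)
  also have "\<dots> \<longleftrightarrow> w = d u \<or> w \<in> C u" using N_ins[OF u] by simp
  also have "\<dots> \<longleftrightarrow> f w = f (d u) \<or> w \<in> C u" using f_inj[OF w dV[OF u]] by simp
  also have "\<dots> \<longleftrightarrow> (y = s x \<and> j = (\<not> i)) \<or> y \<in> C u" using f_d[OF u] fu fw iL yC by auto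
  also have "\<dots> \<longleftrightarrow> constr2 B s (x, i) (y, j)"
    unfolding constr2_def constr1_def using Bs sx by auto
  finally show "E u w \<longleftrightarrow> constr2 B s (f u) (f w)" using fu fw by simp
qed

lemma main_loc: "\<exists>(D::'a set) B s m l lam mu. srg D B m l lam mu \<and> lam + 1 = mu \<and>
   nonadj_invol_aut D B s \<and> graph_iso V E (D \<times> UNIV) (constr2 B s)"
proof -
  have "(a - 2) div 2 + 1 = a div 2" using a_ge2 a_even by (auto elim!: evenE)
  then show ?thesis using srgR autR isoR by (intro exI conjI) assumption+
qed

end

lemma transport:
  fixes D :: "'b set" and B :: "'b \<Rightarrow> 'b \<Rightarrow> bool" and s :: "'b \<Rightarrow> 'b"
    and V :: "'a set" and E :: "'a \<Rightarrow> 'a \<Rightarrow> bool"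
  assumes srg: "srg D B m l lam mu" and aut: "nonadj_invol_aut D B s"
    and iso: "graph_iso V E (D \<times> (UNIV::bool set)) (constr2 B s)"
  shows "\<exists>(D'::nat set) B' s'. srg D' B' m l lam mu \<and> nonadj_invol_aut D' B' s' \<and>
           graph_iso V E (D' \<times> UNIV) (constr2 B' s')"
proof -
  have finD: "finite D" using srg by (simp add: srg_def sgraph_def)
  obtain hh :: "'b \<Rightarrow> nat" where inj: "inj_on hh D" using finite_imp_inj_to_nat_seg[OF finD] by blast
  define g where "g = inv_into D hh"
  have gh: "\<And>x. x \<in> D \<Longrightarrow> g (hh x) = x" unfolding g_def using inj by (rule inv_into_f_f)
  define D' where "D' = hh ` D"
  define B' where "B' x y \<longleftrightarrow> B (g x) (g y)" for x y
  define s' where "s' x = hh (s (g x))" for x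
  have B'h: "\<And>x y. x \<in> D \<Longrightarrow> y \<in> D \<Longrightarrow> B' (hh x) (hh y) \<longleftrightarrow> B x y" using gh by (simp add: B'_def)
  have s'h: "\<And>x. x \<in> D \<Longrightarrow> s' (hh x) = hh (s x)" using gh by (simp add: s'_def)
  have sD: "\<And>x. x \<in> D \<Longrightarrow> s x \<in> D" using aut by (auto simp: nonadj_invol_aut_def)
  have nb: "\<And>x. x \<in> D \<Longrightarrow> nbhd D' B' (hh x) = hh ` nbhd D B x"
    using B'h by (auto simp: nbhd_def D'_def)
  have nbsub: "\<And>x. nbhd D B x \<subseteq> D" by (auto simp: nbhd_def)
  have cardh: "\<And>A. A \<subseteq> D \<Longrightarrow> card (hh ` A) = card A"
    using inj by (meson card_image inj_on_subset)
  have srg': "srg D' B' m l lam mu"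
    unfolding srg_def sgraph_def regular_def
  proof (intro conjI ballI impI)
    show "finite D'" using finD by (simp add: D'_def)
    show "card D' = m" using srg cardh[of D] by (simp add: srg_def D'_def)
  next
    fix x' assume "x' \<in> D'"
    then obtain x where x: "x \<in> D" and xe: "x' = hh x" by (auto simp: D'_def)
    show "\<not> B' x' x'" using srg x xe B'h by (simp add: srg_def sgraph_def)
    show "card (nbhd D' B' x') = l" using srg x xe nb cardh[OF nbsub] by (simp add: srg_def regular_def)
  next
    fix x' y' assume "x' \<in> D'" "y' \<in> D'"
    then obtain x y where x: "x \<in> D" and xe: "x' = hh x" and y: "y \<in> D" and ye: "y' = hh y"
      by (auto simp: D'_def)
    show "B' x' y' = B' y' x'" using srg x y xe ye B'h by (simp add: srg_def sgraph_def)
  next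
    fix x' y' assume "x' \<in> D'" "y' \<in> D'" and ne1: "x' \<noteq> y'"
    then obtain x y where x: "x \<in> D" and xe: "x' = hh x" and y: "y \<in> D" and ye: "y' = hh y"
      by (auto simp: D'_def)
    have xy: "x \<noteq> y" using ne1 xe ye by auto
    have ci: "card (nbhd D' B' x' \<inter> nbhd D' B' y') = card (nbhd D B x \<inter> nbhd D B y)"
    proof -
      have "nbhd D' B' x' \<inter> nbhd D' B' y' = hh ` (nbhd D B x \<inter> nbhd D B y)"
        using nb[OF x] nb[OF y] xe ye inj_on_image_Int[OF inj nbsub nbsub] by simp
      then show ?thesis using cardh[of "nbhd D B x \<inter> nbhd D B y"] nbsub by auto
    qed
    {
      assume "B' x' y'"
      then show "card (nbhd D' B' x' \<inter> nbhd D' B' y') = lam"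
        using srg x y xy xe ye B'h ci by (simp add: srg_def)
    next
      assume "\<not> B' x' y'"
      then show "card (nbhd D' B' x' \<inter> nbhd D' B' y') = mu"
        using srg x y xy xe ye B'h ci by (simp add: srg_def)
    }
  qed
  have aut': "nonadj_invol_aut D' B' s'"
    unfolding nonadj_invol_aut_def
  proof (intro conjI ballI impI)
    show "s' ` D' \<subseteq> D'" using s'h sD by (auto simp: D'_def)
  next
    fix x' assume "x' \<in> D'"
    then obtain x where x: "x \<in> D" and xe: "x' = hh x" by (auto simp: D'_def)
    show "s' (s' x') = x'" using aut x xe s'h sD by (simp add: nonadj_invol_aut_def)
  next
    fix x' y' assume "x' \<in> D'" "y' \<in> D'"
    then obtain x y where x: "x \<in> D" and xe: "x' = hh x" and y: "y \<in> D" and ye: "y' = hh y"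
      by (auto simp: D'_def)
    show "B' (s' x') (s' y') = B' x' y'" using aut x y xe ye s'h sD B'h
      by (simp add: nonadj_invol_aut_def)
  next
    fix x' assume "x' \<in> D'" and ne1: "s' x' \<noteq> x'"
    then obtain x where x: "x \<in> D" and xe: "x' = hh x" by (auto simp: D'_def)
    have "s x \<noteq> x" using ne1 xe s'h[OF x] by auto
    then show "\<not> B' x' (s' x')" using aut x xe s'h sD B'h by (simp add: nonadj_invol_aut_def)
  qed
  obtain F where F: "bij_betw F V (D \<times> UNIV)"
    and Fe: "\<forall>u\<in>V. \<forall>v\<in>V. E u v \<longleftrightarrow> constr2 B s (F u) (F v)"
    using iso by (auto simp: graph_iso_def)
  have bh: "bij_betw hh D D'" using inj by (simp add: D'_def bij_betw_imageI)
  have bm: "bij_betw (map_prod hh id) (D \<times> (UNIV::bool set)) (D' \<times> UNIV)"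
    by (rule bij_betw_map_prod[OF bh bij_betw_id])
  have iso': "graph_iso V E (D' \<times> UNIV) (constr2 B' s')"
    unfolding graph_iso_def
  proof (intro exI conjI ballI)
    show "bij_betw (map_prod hh id \<circ> F) V (D' \<times> UNIV)" by (rule bij_betw_trans[OF F bm])
  next
    fix u v assume u: "u \<in> V" and v: "v \<in> V"
    obtain x i where Fu: "F u = (x, i)" by (cases "F u")
    obtain y j where Fv: "F v = (y, j)" by (cases "F v")
    have x: "x \<in> D" using bij_betw_apply[OF F u] Fu by simp
    have y: "y \<in> D" using bij_betw_apply[OF F v] Fv by simp
    have "hh (s x) = hh y \<longleftrightarrow> s x = y" using inj sD[OF x] y by (auto simp: inj_on_def)
    then have "constr2 B' s' (hh x, i) (hh y, j) \<longleftrightarrow> constr2 B s (x, i) (y, j)"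
      using s'h[OF x] B'h[OF sD[OF x] y] by (auto simp: constr2_def constr1_def)
    then show "E u v \<longleftrightarrow> constr2 B' s' ((map_prod hh id \<circ> F) u) ((map_prod hh id \<circ> F) v)"
      using Fe u v Fu Fv by simp
  qed
  show ?thesis using srg' aut' iso' by blast
qed

theorem theorem2:
  fixes V :: "'a set" and E :: "'a \<Rightarrow> 'a \<Rightarrow> bool" and n k a :: nat
  assumes "deza_graph V E n k (k - 1) a"
    and "k > 1"
    and "\<forall>v\<in>V. beta_at V E (k - 1) v = 1"
  shows "\<exists>(D :: nat set) B m l lam mu. srg D B m l lam mu \<and> lam + 1 = mu \<and>
           (graph_iso V E (D \<times> UNIV) (constr1 B) \<or>
            (\<exists>s. nonadj_invol_aut D B s \<and> graph_iso V E (D \<times> UNIV) (constr2 B s)))"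
proof (cases "V = {}")
  case True
  have "srg ({}::nat set) (\<lambda>_ _. False) 0 0 0 1" by (simp add: srg_def sgraph_def regular_def)
  moreover have "graph_iso V E ({} \<times> UNIV) (constr1 (\<lambda>_ _. False))"
    using True by (simp add: graph_iso_def bij_betw_def)
  moreover have "(0::nat) + 1 = 1" by simp
  ultimately show ?thesis by blast
next
  case False
  interpret dz V E k a
    using assms False unfolding deza_graph_def sgraph_def regular_def beta_at_def
    by unfold_locales auto
  obtain D :: "'a set" and B s m l lam mu where h1: "srg D B m l lam mu" and h2: "lam + 1 = mu"
    and h3: "nonadj_invol_aut D B s" and h4: "graph_iso V E (D \<times> UNIV) (constr2 B s)"
    using main_loc by blast
  obtain D' :: "nat set" and B' s' where "srg D' B' m l lam mu" "nonadj_invol_aut D' B' s'"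
    "graph_iso V E (D' \<times> UNIV) (constr2 B' s')"
    using transport[OF h1 h3 h4] by blast
  then show ?thesis using h2 by blast
qed

end
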